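(* Let $C=\{c_1,\dots,c_m\}\subset\mathbb{R}$ with $c_1\le\dots\le c_m$, let $\mathcal{I}$ be a finite set of closed intervals in $\mathbb{R}$ and $f\ge0$ an integer such that every $I\in\mathcal{I}$ satisfies $|I\cap C|>f$. Let $T$ be the output of the following greedy procedure: start with $T=\emptyset$; for $t=1,2,\dots,m$ in this order, if there exist indices $i,j$ with $1\le i\le t\le j\le m$ such that $\delta_{i,j}(f)\ge|T\cap C_{i,j}|+(j-t+1)$ (with $T$ the current set), add $c_t$ to $T$. Then $|T\cap C_{i,j}|\ge\delta_{i,j}(f)$ for all $1\le i\le j\le m$.
   Context: For a set of points $X$, a set of intervals is $X$-disjoint if every point of $X$ lies in at most one of its intervals. For $1\le i\le j\le m$: $C_{i,j}=\{c_i,\dots,c_j\}$; $\mathcal{I}_{i,j}=\{I\in\mathcal{I}: I\cap C\subseteq C_{i,j}\}$; for $J\subseteq C_{i,j}$, $\delta_{i,j}(J)$ is the maximum size of a $(C_{i,j}\setminus J)$-disjoint subset of $\mathcal{I}_{i,j}$; and $\delta_{i,j}(f)=\max_{J\subseteq C_{i,j},|J|\le f}\delta_{i,j}(J)$. *)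

theory Defs
  imports Complex_Main
begin

definition Cset :: "(nat \<Rightarrow> real) \<Rightarrow> nat \<Rightarrow> nat \<Rightarrow> real set" where
  "Cset c i j = c ` {i..j}"

definition X_disjoint :: "real set \<Rightarrow> real set set \<Rightarrow> bool" where
  "X_disjoint X S = (\<forall>x\<in>X. card {I\<in>S. x \<in> I} \<le> 1)"

definition Iij :: "(nat \<Rightarrow> real) \<Rightarrow> nat \<Rightarrow> real set set \<Rightarrow> nat \<Rightarrow> nat \<Rightarrow> real set set" where
  "Iij c m \<I> i j = {I\<in>\<I>. I \<inter> Cset c 1 m \<subseteq> Cset c i j}"

definition deltaJ :: "(nat \<Rightarrow> real) \<Rightarrow> nat \<Rightarrow> real set set \<Rightarrow> nat \<Rightarrow> nat \<Rightarrow> real set \<Rightarrow> nat" where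
  "deltaJ c m \<I> i j J =
     Max (card ` {S. S \<subseteq> Iij c m \<I> i j \<and> X_disjoint (Cset c i j - J) S})"

definition delta :: "(nat \<Rightarrow> real) \<Rightarrow> nat \<Rightarrow> real set set \<Rightarrow> nat \<Rightarrow> nat \<Rightarrow> nat \<Rightarrow> nat" where
  "delta c m \<I> f i j =
     Max {deltaJ c m \<I> i j J | J. J \<subseteq> Cset c i j \<and> card J \<le> f}"

primrec greedy :: "(nat \<Rightarrow> real) \<Rightarrow> nat \<Rightarrow> real set set \<Rightarrow> nat \<Rightarrow> nat \<Rightarrow> real set" where
  "greedy c m \<I> f 0 = {}"
| "greedy c m \<I> f (Suc t) =
     (let T = greedy c m \<I> f t in
      if (\<exists>i j. 1 \<le> i \<and> i \<le> Suc t \<and> Suc t \<le> j \<and> j \<le> m \<and>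
               delta c m \<I> f i j \<ge> card (T \<inter> Cset c i j) + (j - Suc t + 1))
      then insert (c (Suc t)) T else T)"

end

theory Submission
  imports Defs
begin

lemma finite_Cset[simp]: "finite (Cset c i j)"
  unfolding Cset_def by simp

lemma Cset_Suc: "i \<le> Suc j \<Longrightarrow> Cset c i (Suc j) = insert (c (Suc j)) (Cset c i j)"
  unfolding Cset_def by (simp add: atLeastAtMostSuc_conv)

lemma deltaJ_ge:
  assumes fin: "finite \<I>" and "S \<subseteq> Iij c m \<I> i j" and "X_disjoint (Cset c i j - J) S"
  shows "card S \<le> deltaJ c m \<I> i j J"
proof -
  have "finite {S. S \<subseteq> Iij c m \<I> i j \<and> X_disjoint (Cset c i j - J) S}"
    by (rule finite_subset[of _ "Pow \<I>"]) (auto simp: Iij_def fin)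
  then show ?thesis unfolding deltaJ_def using assms by (intro Max_ge) auto
qed

lemma deltaJ_le:
  assumes fin: "finite \<I>"
    and h: "\<And>S. S \<subseteq> Iij c m \<I> i j \<Longrightarrow> X_disjoint (Cset c i j - J) S \<Longrightarrow> card S \<le> k"
  shows "deltaJ c m \<I> i j J \<le> k"
proof -
  have "finite {S. S \<subseteq> Iij c m \<I> i j \<and> X_disjoint (Cset c i j - J) S}"
    by (rule finite_subset[of _ "Pow \<I>"]) (auto simp: Iij_def fin)
  moreover have "{} \<in> {S. S \<subseteq> Iij c m \<I> i j \<and> X_disjoint (Cset c i j - J) S}"
    by (auto simp: X_disjoint_def)
  ultimately show ?thesis unfolding deltaJ_def using h
    by (subst Max_le_iff) auto
qed

lemma delta_ge:
  assumes "J \<subseteq> Cset c i j" "card J \<le> f"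
  shows "deltaJ c m \<I> i j J \<le> delta c m \<I> f i j"
proof -
  have "{deltaJ c m \<I> i j J | J. J \<subseteq> Cset c i j \<and> card J \<le> f}
        = (deltaJ c m \<I> i j) ` {J. J \<subseteq> Cset c i j \<and> card J \<le> f}" by auto
  moreover have "finite {J. J \<subseteq> Cset c i j \<and> card J \<le> f}"
    by (rule finite_subset[of _ "Pow (Cset c i j)"]) auto
  ultimately have "finite {deltaJ c m \<I> i j J | J. J \<subseteq> Cset c i j \<and> card J \<le> f}" by simp
  then show ?thesis unfolding delta_def using assms by (intro Max_ge) auto
qed

lemma delta_le:
  assumes h: "\<And>J. J \<subseteq> Cset c i j \<Longrightarrow> card J \<le> f \<Longrightarrow> deltaJ c m \<I> i j J \<le> k"
  shows "delta c m \<I> f i j \<le> k"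
proof -
  have eq: "{deltaJ c m \<I> i j J | J. J \<subseteq> Cset c i j \<and> card J \<le> f}
        = (deltaJ c m \<I> i j) ` {J. J \<subseteq> Cset c i j \<and> card J \<le> f}" by auto
  have "finite {J. J \<subseteq> Cset c i j \<and> card J \<le> f}"
    by (rule finite_subset[of _ "Pow (Cset c i j)"]) auto
  then have fi: "finite ((deltaJ c m \<I> i j) ` {J. J \<subseteq> Cset c i j \<and> card J \<le> f})" by simp
  have "{} \<in> {J. J \<subseteq> Cset c i j \<and> card J \<le> f}" by simp
  then have ne: "(deltaJ c m \<I> i j) ` {J. J \<subseteq> Cset c i j \<and> card J \<le> f} \<noteq> {}" by blast
  show ?thesis unfolding delta_def eq
  proof (rule Max.boundedI[OF fi ne])
    fix a assume "a \<in> (deltaJ c m \<I> i j) ` {J. J \<subseteq> Cset c i j \<and> card J \<le> f}"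
    then obtain J where "J \<subseteq> Cset c i j" "card J \<le> f" "a = deltaJ c m \<I> i j J" by blast
    then show "a \<le> k" using h by simp
  qed
qed

lemma keyK:
  assumes fin: "finite \<I>"
    and big: "\<forall>I\<in>\<I>. card (I \<inter> Cset c 1 m) > f"
    and S: "S \<subseteq> Iij c m \<I> i j" and dis: "X_disjoint (Cset c i j - J) S"
    and J: "J \<subseteq> Cset c i j" "card J \<le> f"
    and I1: "I1 \<in> S" and I2: "I2 \<in> S" and sub: "I2 \<inter> Cset c 1 m \<subseteq> I1"
  shows "I1 = I2"
proof (rule ccontr)
  assume ne: "I1 \<noteq> I2"
  have I2I: "I2 \<in> \<I>" and I2C: "I2 \<inter> Cset c 1 m \<subseteq> Cset c i j"
    using S I2 by (auto simp: Iij_def)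
  have finJ: "finite J" using J(1) by (rule finite_subset) simp
  have "\<not> (I2 \<inter> Cset c 1 m \<subseteq> J)"
  proof
    assume "I2 \<inter> Cset c 1 m \<subseteq> J"
    then have "card (I2 \<inter> Cset c 1 m) \<le> card J" using finJ by (rule card_mono[rotated])
    moreover have "card (I2 \<inter> Cset c 1 m) > f" using big I2I by blast
    ultimately show False using J(2) by simp
  qed
  then obtain x where x: "x \<in> I2" "x \<in> Cset c 1 m" "x \<notin> J" by blast
  have xX: "x \<in> Cset c i j - J" using x I2C by auto
  have finS: "finite S" using finite_subset[OF _ fin, of S] S by (auto simp: Iij_def)
  have "{I1, I2} \<subseteq> {I\<in>S. x \<in> I}" using I1 I2 x sub by auto
  then have "card {I1, I2} \<le> card {I\<in>S. x \<in> I}" using finS by (intro card_mono) auto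
  moreover have "card {I\<in>S. x \<in> I} \<le> 1" using dis xX by (auto simp: X_disjoint_def)
  ultimately show False using ne by simp
qed

lemma L0:
  assumes fin: "finite \<I>"
    and big: "\<forall>I\<in>\<I>. card (I \<inter> Cset c 1 m) > f"
  shows "delta c m \<I> f i i \<le> 1"
proof (rule delta_le, rule deltaJ_le[OF fin])
  fix J S assume J: "J \<subseteq> Cset c i i" "card J \<le> f"
    and S: "S \<subseteq> Iij c m \<I> i i" and dis: "X_disjoint (Cset c i i - J) S"
  have "I1 = I2" if "I1 \<in> S" "I2 \<in> S" for I1 I2
  proof (rule keyK[OF fin big S dis J that])
    have "I1 \<in> \<I>" "I1 \<inter> Cset c 1 m \<subseteq> {c i}" using S that by (auto simp: Iij_def Cset_def)
    moreover have "I1 \<inter> Cset c 1 m \<noteq> {}" using big \<open>I1 \<in> \<I>\<close> by fastforce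
    ultimately have "c i \<in> I1" by blast
    moreover have "I2 \<inter> Cset c 1 m \<subseteq> {c i}" using S that by (auto simp: Iij_def Cset_def)
    ultimately show "I2 \<inter> Cset c 1 m \<subseteq> I1" by blast
  qed
  moreover have finS: "finite S" using finite_subset[OF _ fin, of S] S by (auto simp: Iij_def)
  ultimately show "card S \<le> 1" by (simp add: card_le_Suc0_iff_eq)
qed

lemma L1:
  assumes sorted: "\<And>k l. 1 \<le> k \<Longrightarrow> k \<le> l \<Longrightarrow> l \<le> m \<Longrightarrow> c k \<le> c l"
    and fin: "finite \<I>"
    and closed: "\<forall>I\<in>\<I>. \<exists>a b. a \<le> b \<and> I = {a..b}"
    and big: "\<forall>I\<in>\<I>. card (I \<inter> Cset c 1 m) > f"
    and ij: "1 \<le> i" "i \<le> Suc j" "Suc j \<le> m"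
  shows "delta c m \<I> f i (Suc j) \<le> delta c m \<I> f i j + 1"
proof (rule delta_le, rule deltaJ_le[OF fin])
  fix J S assume J: "J \<subseteq> Cset c i (Suc j)" "card J \<le> f"
    and S: "S \<subseteq> Iij c m \<I> i (Suc j)" and dis: "X_disjoint (Cset c i (Suc j) - J) S"
  define p where "p = c (Suc j)"
  have CS: "Cset c i (Suc j) = insert p (Cset c i j)" using ij by (simp add: Cset_Suc p_def)
  have finS: "finite S" using finite_subset[OF _ fin, of S] S by (auto simp: Iij_def)
  define S1 where "S1 = {I\<in>S. p \<in> I}"
  define S0 where "S0 = S - S1"
  have le_p: "x \<le> p" if "x \<in> Cset c i (Suc j)" for x
    using that ij sorted unfolding Cset_def p_def by auto
  have comp: "I2 \<inter> Cset c 1 m \<subseteq> I1" if H: "I1 \<in> S1" "I2 \<in> S1" "I1 = {a1..b1}" "a1 \<le> a2" "I2 \<subseteq> {a2..}" for I1 I2 a1 a2 b1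
  proof
    fix x assume x: "x \<in> I2 \<inter> Cset c 1 m"
    note ab = H(3,4,5)
    have "x \<in> Cset c i (Suc j)" using x H(2) S by (auto simp: S1_def Iij_def)
    then have "x \<le> p" by (rule le_p)
    moreover have "p \<le> b1" using H(1) ab by (auto simp: S1_def)
    moreover have "a2 \<le> x" using x ab by auto
    ultimately show "x \<in> I1" using ab by auto
  qed
  have "I1 = I2" if TT: "I1 \<in> S1" "I2 \<in> S1" for I1 I2
  proof -
    have JJ: "J \<subseteq> Cset c i (Suc j)" "card J \<le> f" using J by auto
    have "I1 \<in> \<I>" using TT S by (auto simp: S1_def Iij_def)
    then obtain a1 b1 where 1: "I1 = {a1..b1}" using closed by meson
    have "I2 \<in> \<I>" using TT S by (auto simp: S1_def Iij_def)
    then obtain a2 b2 where 2: "I2 = {a2..b2}" using closed by meson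
    show ?thesis
    proof (cases "a1 \<le> a2")
      case True
      have "I2 \<subseteq> {a2..}" using 2 by auto
      then have "I2 \<inter> Cset c 1 m \<subseteq> I1" by (rule comp[OF TT 1 True])
      moreover have "I1 \<in> S" "I2 \<in> S" using TT by (auto simp: S1_def)
      ultimately show ?thesis by (intro keyK[OF fin big S dis JJ])
    next
      case False
      have "I1 \<subseteq> {a1..}" using 1 by auto
      moreover have "a2 \<le> a1" using False by simp
      ultimately have "I1 \<inter> Cset c 1 m \<subseteq> I2" by (intro comp[OF TT(2) TT(1) 2])
      moreover have "I1 \<in> S" "I2 \<in> S" using TT by (auto simp: S1_def)
      ultimately have "I2 = I1" by (intro keyK[OF fin big S dis JJ])
      then show ?thesis by simp
    qed
  qed
  moreover have "finite S1" using finS by (simp add: S1_def)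
  ultimately have c1: "card S1 \<le> 1" using card_le_Suc0_iff_eq[of S1] by simp
  have "S0 \<subseteq> Iij c m \<I> i j" using S CS by (auto simp: S0_def S1_def Iij_def)
  moreover have "X_disjoint (Cset c i j - (J \<inter> Cset c i j)) S0"
    unfolding X_disjoint_def
  proof
    fix x assume x: "x \<in> Cset c i j - (J \<inter> Cset c i j)"
    then have "x \<in> Cset c i (Suc j) - J" using CS by auto
    then have "card {I\<in>S. x \<in> I} \<le> 1" using dis by (auto simp: X_disjoint_def)
    moreover have "card {I\<in>S0. x \<in> I} \<le> card {I\<in>S. x \<in> I}"
      using finS by (intro card_mono) (auto simp: S0_def)
    ultimately show "card {I\<in>S0. x \<in> I} \<le> 1" by simp
  qed
  ultimately have "card S0 \<le> deltaJ c m \<I> i j (J \<inter> Cset c i j)" by (rule deltaJ_ge[OF fin])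
  also have "\<dots> \<le> delta c m \<I> f i j"
  proof (rule delta_ge)
    have "finite J" using J(1) by (rule finite_subset) simp
    then have "card (J \<inter> Cset c i j) \<le> card J" by (intro card_mono) auto
    then show "card (J \<inter> Cset c i j) \<le> f" using J(2) by simp
  qed simp
  finally have c0: "card S0 \<le> delta c m \<I> f i j" .
  have SU: "S = S0 \<union> S1" "S0 \<inter> S1 = {}" by (auto simp: S0_def S1_def)
  have "finite S0" "finite S1" using finS SU(1) by auto
  then have "card S = card S0 + card S1" using SU by (simp add: card_Un_disjoint)
  then show "card S \<le> delta c m \<I> f i j + 1" using c0 c1 by simp
qed

lemma greedy_mono: "t \<le> t' \<Longrightarrow> greedy c m \<I> f t \<subseteq> greedy c m \<I> f t'"
proof (induction t' rule: dec_induct)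
  case (step n)
  have "greedy c m \<I> f n \<subseteq> greedy c m \<I> f (Suc n)" by (auto simp: Let_def)
  then show ?case using step by blast
qed simp

theorem lemma7:
  fixes c :: "nat \<Rightarrow> real" and m f :: nat and \<I> :: "real set set"
  assumes sorted: "\<And>k l. 1 \<le> k \<Longrightarrow> k \<le> l \<Longrightarrow> l \<le> m \<Longrightarrow> c k \<le> c l"
    and fin: "finite \<I>"
    and closed: "\<forall>I\<in>\<I>. \<exists>a b. a \<le> b \<and> I = {a..b}"
    and big: "\<forall>I\<in>\<I>. card (I \<inter> Cset c 1 m) > f"
  shows "\<forall>i j. 1 \<le> i \<longrightarrow> i \<le> j \<longrightarrow> j \<le> m \<longrightarrow>
           card (greedy c m \<I> f m \<inter> Cset c i j) \<ge> delta c m \<I> f i j"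
proof -
  have P: "\<forall>i. 1 \<le> i \<longrightarrow> i \<le> t \<longrightarrow> t \<le> m \<longrightarrow>
      delta c m \<I> f i t \<le> card (greedy c m \<I> f t \<inter> Cset c i t)" for t
  proof (induction t)
    case 0
    then show ?case by simp
  next
    case (Suc t)
    show ?case
    proof (intro allI impI)
      fix i assume i: "1 \<le> i" "i \<le> Suc t" "Suc t \<le> m"
      define T where "T = greedy c m \<I> f t"
      define cond where "cond = (\<exists>i j. 1 \<le> i \<and> i \<le> Suc t \<and> Suc t \<le> j \<and> j \<le> m \<and>
               delta c m \<I> f i j \<ge> card (T \<inter> Cset c i j) + (j - Suc t + 1))"
      have G: "greedy c m \<I> f (Suc t) = (if cond then insert (c (Suc t)) T else T)"
        by (simp only: greedy.simps Let_def T_def cond_def)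
      show "delta c m \<I> f i (Suc t) \<le> card (greedy c m \<I> f (Suc t) \<inter> Cset c i (Suc t))"
      proof (cases cond)
        case False
        then have "\<not> (1 \<le> i \<and> i \<le> Suc t \<and> Suc t \<le> Suc t \<and> Suc t \<le> m \<and>
               delta c m \<I> f i (Suc t) \<ge> card (T \<inter> Cset c i (Suc t)) + (Suc t - Suc t + 1))"
          unfolding cond_def by blast
        then have "\<not> delta c m \<I> f i (Suc t) \<ge> card (T \<inter> Cset c i (Suc t)) + 1"
          using i by simp
        then show ?thesis using G False by simp
      next
        case True
        then have G': "greedy c m \<I> f (Suc t) = insert (c (Suc t)) T" using G by simp
        show ?thesis
        proof (cases "i = Suc t")
          case True
          have "delta c m \<I> f i (Suc t) \<le> 1" using L0[OF fin big] True by simp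
          moreover have "c (Suc t) \<in> greedy c m \<I> f (Suc t) \<inter> Cset c i (Suc t)"
            using G' True by (auto simp: Cset_def)
          then have "card (greedy c m \<I> f (Suc t) \<inter> Cset c i (Suc t)) \<ge> 1"
          proof -
            have "finite (greedy c m \<I> f (Suc t) \<inter> Cset c i (Suc t))" by simp
            moreover have "{c (Suc t)} \<subseteq> greedy c m \<I> f (Suc t) \<inter> Cset c i (Suc t)"
              using \<open>c (Suc t) \<in> greedy c m \<I> f (Suc t) \<inter> Cset c i (Suc t)\<close> by simp
            ultimately have "card {c (Suc t)} \<le> card (greedy c m \<I> f (Suc t) \<inter> Cset c i (Suc t))"
              by (rule card_mono)
            then show ?thesis by simp
          qed
          ultimately show ?thesis by simp
        next
          case False
          then have it: "i \<le> t" using i by simp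
          have IH: "delta c m \<I> f i t \<le> card (T \<inter> Cset c i t)"
            using Suc.IH i it unfolding T_def by simp
          have CS: "Cset c i (Suc t) = insert (c (Suc t)) (Cset c i t)" using i by (simp add: Cset_Suc)
          show ?thesis
          proof (cases "c (Suc t) \<in> Cset c i t")
            case True
            then have "Cset c i (Suc t) = Cset c i t" using CS by (simp add: insert_absorb)
            then have "delta c m \<I> f i (Suc t) = delta c m \<I> f i t" by (simp add: delta_def deltaJ_def Iij_def)
            moreover have "card (T \<inter> Cset c i t) \<le> card (greedy c m \<I> f (Suc t) \<inter> Cset c i (Suc t))"
              using G' CS by (intro card_mono) auto
            ultimately show ?thesis using IH by simp
          next
            case False
            have "delta c m \<I> f i (Suc t) \<le> delta c m \<I> f i t + 1"
              using L1[OF sorted fin closed big, of i t] i by simp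
            moreover have "card (insert (c (Suc t)) (T \<inter> Cset c i t)) = card (T \<inter> Cset c i t) + 1"
              using False by simp
            moreover have "card (insert (c (Suc t)) (T \<inter> Cset c i t)) \<le> card (greedy c m \<I> f (Suc t) \<inter> Cset c i (Suc t))"
              using G' CS by (intro card_mono) auto
            ultimately show ?thesis using IH by simp
          qed
        qed
      qed
    qed
  qed
  show ?thesis
  proof (intro allI impI)
    fix i j assume ij: "1 \<le> i" "i \<le> j" "j \<le> m"
    have "delta c m \<I> f i j \<le> card (greedy c m \<I> f j \<inter> Cset c i j)" using P ij by blast
    also have "\<dots> \<le> card (greedy c m \<I> f m \<inter> Cset c i j)"
      using greedy_mono[OF ij(3), of c m \<I> f] by (intro card_mono) auto
    finally show "card (greedy c m \<I> f m \<inter> Cset c i j) \<ge> delta c m \<I> f i j" .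
  qed
qed

end
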